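(* Let $p$ and $q$ be integers with $p$ odd and $q$ positive, and let $\omega=e^{i\pi p/q}$. Then $$\gamma(\omega)=\sum_{j=1}^{q}\omega^{j-1}\left(D_{j,q}+E_{j,p,q}\right),$$ where $$E_{j,p,q}=\log\frac{\Gamma\left(\frac{j+1}{2q}\right)\Gamma\left(\frac{j+q}{2q}\right)}{\Gamma\left(\frac{j}{2q}\right)\Gamma\left(\frac{j+q+1}{2q}\right)},\qquad D_{j,q}=\frac{1}{2q}\left[\psi\!\left(\frac12+\frac{j}{2q}\right)-\psi\!\left(\frac{j}{2q}\right)\right].$$
   Context: $\gamma(z)=\sum_{n=1}^{\infty} z^{n-1}\left(\frac{1}{n}-\log\frac{n+1}{n}\right)$ for $|z|\le1$. $\Gamma$ is Euler's gamma function and $\psi=\Gamma'/\Gamma$ is the digamma function. *)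

theory Defs
  imports "HOL-Analysis.Analysis"
begin

text \<open>Terms of the series gamma(z) = sum_{n>=1} z^(n-1) (1/n - log((n+1)/n)),
  reindexed from 0 (index m = n - 1).\<close>
definition gamma_term :: "complex \<Rightarrow> nat \<Rightarrow> complex" where
  "gamma_term z m = z ^ m * complex_of_real (1 / real (m + 1) - ln (real (m + 2) / real (m + 1)))"

definition gamma_fun :: "complex \<Rightarrow> complex" where
  "gamma_fun z = (\<Sum>m. gamma_term z m)"

definition E_coef :: "nat \<Rightarrow> int \<Rightarrow> nat \<Rightarrow> real" where
  "E_coef j p q = ln ((Gamma ((real j + 1) / (2 * real q)) * Gamma ((real j + real q) / (2 * real q)))
      / (Gamma (real j / (2 * real q)) * Gamma ((real j + real q + 1) / (2 * real q))))"

definition D_coef :: "nat \<Rightarrow> nat \<Rightarrow> real" where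
  "D_coef j q = (1 / (2 * real q)) * (Digamma (1/2 + real j / (2 * real q)) - Digamma (real j / (2 * real q)))"

end

theory Submission
  imports Defs
begin
lemma om_pow:
  fixes p :: int and Q :: nat
  assumes "odd p" "Q > 0"
  shows "exp (\<i> * complex_of_real (pi * real_of_int p / real Q)) ^ Q = -1"
proof -
  obtain r where r: "p = 2*r+1" using assms(1) by (metis oddE)
  have "exp (\<i> * complex_of_real (pi * real_of_int p / real Q)) ^ Q
      = exp (of_nat Q * (\<i> * complex_of_real (pi * real_of_int p / real Q)))"
    by (rule exp_of_nat_mult[symmetric])
  also have "of_nat Q * (\<i> * complex_of_real (pi * real_of_int p / real Q)) = 
     ((2 * of_int r + 1) * pi) * \<i>"
    using assms(2) by (simp add: r field_simps)
  also have "exp \<dots> = -1"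
    by (rule exp_integer_2pi_plus1) simp
  finally show ?thesis .
qed
lemma digamma_diff_lim:
  fixes a :: real assumes "a > 0"
  shows "(\<lambda>n. \<Sum>k<n. (1/(real k + a) - 1/(real k + (a + 1/2)))) \<longlonglongrightarrow> Digamma (a + 1/2) - Digamma a"
proof -
  have l1: "(\<lambda>m. of_real (ln (real m)) - (\<Sum>n<m. inverse (a + 1/2 + of_nat n))) \<longlonglongrightarrow> Digamma (a+1/2)"
    by (rule Digamma_LIMSEQ) (use assms in simp)
  have l2: "(\<lambda>m. of_real (ln (real m)) - (\<Sum>n<m. inverse (a + of_nat n))) \<longlonglongrightarrow> Digamma a"
    by (rule Digamma_LIMSEQ) (use assms in simp)
  have "(\<lambda>m. (of_real (ln (real m)) - (\<Sum>n<m. inverse (a + 1/2 + of_nat n))) - (of_real (ln (real m)) - (\<Sum>n<m. inverse (a + of_nat n)))) \<longlonglongrightarrow> Digamma (a+1/2) - Digamma a"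
    by (rule tendsto_diff[OF l1 l2])
  moreover have "\<And>m. (of_real (ln (real m)) - (\<Sum>n<m. inverse (a + 1/2 + of_nat n))) - (of_real (ln (real m)) - (\<Sum>n<m. inverse (a + of_nat n))) = (\<Sum>k<m. (1/(real k + a) - 1/(real k + (a + 1/2))))"
  proof -
    fix m
    have "(of_real (ln (real m)) - (\<Sum>n<m. inverse (a + 1/2 + of_nat n))) - (of_real (ln (real m)) - (\<Sum>n<m. inverse (a + of_nat n)))
        = (\<Sum>n<m. inverse (a + of_nat n)) - (\<Sum>n<m. inverse (a + 1/2 + of_nat n))" by (simp only: diff_diff_eq2 diff_add_cancel add_diff_cancel_left')
    also have "\<dots> = (\<Sum>n<m. inverse (a + of_nat n) - inverse (a + 1/2 + of_nat n))" by (rule sum_subtractf[symmetric])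
    also have "\<dots> = (\<Sum>k<m. (1/(real k + a) - 1/(real k + (a + 1/2))))"
    proof (rule sum.cong[OF refl])
      fix k assume "k \<in> {..<m}"
      have "a + of_nat k = real k + a" "a + 1/2 + of_nat k = real k + (a + 1/2)" by simp_all
      then show "inverse (a + of_nat k) - inverse (a + 1/2 + of_nat k) = 1/(real k + a) - 1/(real k + (a + 1/2))"
        by (simp only: inverse_eq_divide)
    qed
    finally show "(of_real (ln (real m)) - (\<Sum>n<m. inverse (a + 1/2 + of_nat n))) - (of_real (ln (real m)) - (\<Sum>n<m. inverse (a + of_nat n))) = (\<Sum>k<m. (1/(real k + a) - 1/(real k + (a + 1/2))))" .
  qed
  ultimately show ?thesis by simp
qed

lemma gamma_prod_lim:
  fixes a b c d :: real
  assumes "a > 0" "b > 0" "c > 0" "d > 0" "a + d = b + c"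
  shows "(\<lambda>n. \<Sum>k<n. ln (((real k + a) * (real k + d)) / ((real k + b) * (real k + c))))
     \<longlonglongrightarrow> ln ((Gamma b * Gamma c) / (Gamma a * Gamma d))"
proof -
  define P where "P n = pochhammer a n * pochhammer d n / (pochhammer b n * pochhammer c n)" for n
  have ppos: "pochhammer x n > 0" if "x > 0" for x :: real and n
    using that by (simp add: pochhammer_pos)
  have eq: "Gamma_series b n * Gamma_series c n / (Gamma_series a n * Gamma_series d n) = P (Suc n)" if "n > 0" for n
  proof -
    have e: "exp (b * ln (real n)) * exp (c * ln (real n)) = exp (a * ln (real n)) * exp (d * ln (real n))"
      by (simp add: exp_add[symmetric]) (metis assms(5) distrib_right)
    have alg: "(F*eb/pb)*(F*ec/pc)/((F*ea/pa)*(F*ed/pd)) = pa*pd/(pb*pc)"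
      if "eb*ec = ea*ed" "F \<noteq> 0" "ea \<noteq> 0" "ed \<noteq> 0" "pb \<noteq> 0" "pc \<noteq> 0" "pa \<noteq> 0" "pd \<noteq> 0"
      for F eb ec ea ed pa pb pc pd :: real
    proof -
      have "(F*eb/pb)*(F*ec/pc)/((F*ea/pa)*(F*ed/pd)) = (F*F*(eb*ec)*(pa*pd))/(F*F*(ea*ed)*(pb*pc))"
        using that by (simp add: field_simps)
      also have "\<dots> = pa*pd/(pb*pc)" using that by (simp add: field_simps)
      finally show ?thesis .
    qed
    have nz: "pochhammer x (Suc n) \<noteq> 0" if "x>0" for x :: real using ppos[OF that, of "Suc n"] by linarith
    show ?thesis unfolding Gamma_series_def P_def Suc_eq_plus1 of_real_eq_id id_apply
      by (rule alg[OF e]) (simp_all add: nz assms)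
  qed
  have ga: "Gamma a \<noteq> 0" using Gamma_real_pos[OF assms(1)] by linarith
  have gb: "Gamma b \<noteq> 0" using Gamma_real_pos[OF assms(2)] by linarith
  have gc: "Gamma c \<noteq> 0" using Gamma_real_pos[OF assms(3)] by linarith
  have gd: "Gamma d \<noteq> 0" using Gamma_real_pos[OF assms(4)] by linarith
  have "(\<lambda>n. Gamma_series b n * Gamma_series c n / (Gamma_series a n * Gamma_series d n)) \<longlonglongrightarrow> (Gamma b * Gamma c) / (Gamma a * Gamma d)"
    by (intro tendsto_intros) (use assms ga gd in auto)
  then have "(\<lambda>n. P (Suc n)) \<longlonglongrightarrow> (Gamma b * Gamma c) / (Gamma a * Gamma d)"
    by (rule Lim_transform_eventually) (rule eventually_mono[OF eventually_gt_at_top[of 0]], rule eq)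
  then have "P \<longlonglongrightarrow> (Gamma b * Gamma c) / (Gamma a * Gamma d)"
    by (rule LIMSEQ_imp_Suc)
  then have "(\<lambda>n. ln (P n)) \<longlonglongrightarrow> ln ((Gamma b * Gamma c) / (Gamma a * Gamma d))"
    using assms ga gb gc gd by (intro tendsto_ln) auto
  moreover have "ln (P n) = (\<Sum>k<n. ln (((real k + a) * (real k + d)) / ((real k + b) * (real k + c))))" for n
  proof -
    have "P n = (\<Prod>k<n. ((real k + a) * (real k + d)) / ((real k + b) * (real k + c)))"
      unfolding P_def pochhammer_prod by (simp add: prod_dividef prod.distrib atLeast0LessThan add_ac)
    then show ?thesis using assms by (simp add: ln_prod)
  qed
  ultimately show ?thesis by simp
qed
definition bb :: "nat \<Rightarrow> real" where
  "bb m = 1 / real (m + 1) - ln (real (m + 2) / real (m + 1))"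

lemma term_ident:
  fixes Q i k :: nat
  assumes "Q > 0"
  defines "al \<equiv> real (Suc i) / (2 * real Q)"
  defines "be \<equiv> (real (Suc i) + 1) / (2 * real Q)"
  defines "ga \<equiv> (real (Suc i) + real Q) / (2 * real Q)"
  defines "de \<equiv> (real (Suc i) + real Q + 1) / (2 * real Q)"
  shows "bb (2*Q*k + i) - bb (2*Q*k + Q + i) =
    (1 / (2 * real Q)) * (1/(real k + al) - 1/(real k + (al + 1/2)))
    + ln (((real k + al) * (real k + de)) / ((real k + be) * (real k + ga)))"
proof -
  define N1 where "N1 = real (2*Q*k + i + 1)"
  define N3 where "N3 = real (2*Q*k + Q + i + 1)"
  have Qp: "real Q > 0" using assms by simp
  have N1p: "N1 > 0" unfolding N1_def by (simp only: of_nat_0_less_iff)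
  have N3p: "N3 > 0" unfolding N3_def by (simp only: of_nat_0_less_iff)
  have e1: "real k + al = N1 / (2 * real Q)" unfolding al_def N1_def using Qp by (simp add: field_simps)
  have e2: "real k + be = (N1 + 1) / (2 * real Q)" unfolding be_def N1_def using Qp by (simp add: field_simps)
  have e3: "real k + ga = N3 / (2 * real Q)" unfolding ga_def N3_def using Qp by (simp add: field_simps)
  have e4: "real k + de = (N3 + 1) / (2 * real Q)" unfolding de_def N3_def using Qp by (simp add: field_simps)
  have e5: "real k + (al + 1/2) = N3 / (2 * real Q)" unfolding al_def N3_def using Qp by (simp add: field_simps)
  have b1: "bb (2*Q*k + i) = 1 / N1 - (ln (N1 + 1) - ln N1)"
  proof -
    have h: "real (2*Q*k + i + 2) = N1 + 1" "real (2*Q*k + i + 1) = N1" unfolding N1_def by simp_all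
    show ?thesis unfolding bb_def h using N1p by (simp add: ln_div)
  qed
  have b2: "bb (2*Q*k + Q + i) = 1 / N3 - (ln (N3 + 1) - ln N3)"
  proof -
    have h: "real (2*Q*k + Q + i + 2) = N3 + 1" "real (2*Q*k + Q + i + 1) = N3" unfolding N3_def by simp_all
    show ?thesis unfolding bb_def h using N3p by (simp add: ln_div)
  qed
  have r: "((N1 / (2 * real Q)) * ((N3 + 1) / (2 * real Q))) / (((N1 + 1) / (2 * real Q)) * (N3 / (2 * real Q)))
      = (N1 * (N3 + 1)) / ((N1 + 1) * N3)" using Qp N1p N3p by (simp add: divide_simps)
  have l: "ln ((N1 * (N3 + 1)) / ((N1 + 1) * N3)) = ln N1 + ln (N3 + 1) - ln (N1 + 1) - ln N3"
    using N1p N3p by (simp add: ln_div ln_mult)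
  have d: "(1 / (2 * real Q)) * (1/(N1 / (2 * real Q)) - 1/(N3 / (2 * real Q))) = 1/N1 - 1/N3"
    using Qp N1p N3p by (simp add: field_simps)
  show ?thesis unfolding e1 e2 e3 e4 e5 r l d b1 b2 by simp
qed

lemma sum_shift_lemma: "(\<Sum>m\<in>{a..<a+n}. f m) = (\<Sum>i<n. f (a+i))" for a n :: nat
  by (induction n) auto

lemma sum_split_lemma: "(\<Sum>i<a+n. g i) = (\<Sum>i<a. g i) + (\<Sum>i<n. g (a+i))" for a n :: nat
  by (induction n) (auto simp: add.assoc)

lemma sum_one_lemma: "(\<Sum>j=1..n. f j) = (\<Sum>i<n. f (Suc i))"
  by (induction n) (auto simp: atLeastAtMostSuc_conv add.commute)

theorem corollary31:
  fixes p q :: int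
  assumes "odd p" and "q > 0"
  defines "\<omega> \<equiv> exp (\<i> * complex_of_real (pi * real_of_int p / real_of_int q))"
  shows "summable (gamma_term \<omega>) \<and>
    gamma_fun \<omega> = (\<Sum>j=1..nat q. \<omega> ^ (j - 1) *
        complex_of_real (D_coef j (nat q) + E_coef j p (nat q)))"
proof -
  define Q where "Q = nat q"
  have Q0: "Q > 0" using assms(2) by (simp add: Q_def)
  have rq: "real_of_int q = real Q" using assms(2) by (simp add: Q_def)
  have om: "\<omega> = exp (\<i> * complex_of_real (pi * real_of_int p / real Q))" unfolding \<omega>_def rq ..
  have omQ: "\<omega> ^ Q = -1" unfolding om by (rule om_pow[OF assms(1) Q0])
  have om2Q: "\<omega> ^ (2*Q*k) = 1" for k
  proof -
    have "\<omega> ^ (2*Q*k) = ((\<omega> ^ Q) ^ 2) ^ k" by (simp add: power_mult[symmetric] mult_ac)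
    then show ?thesis by (simp add: omQ)
  qed
  have nom: "norm \<omega> = 1" unfolding om by (rule norm_exp_i_times)
  have gt: "gamma_term \<omega> m = \<omega> ^ m * of_real (bb m)" for m
    unfolding gamma_term_def bb_def by simp
  have bnd: "norm (gamma_term \<omega> m) \<le> inverse (real (Suc m) ^ 2)" for m
  proof -
    define x where "x = 1 / real (m+1)"
    have x0: "0 \<le> x" "x \<le> 1" unfolding x_def by auto
    have hx: "real (m + 2) / real (m + 1) = 1 + x" unfolding x_def
      by (simp add: divide_simps)
    have "bb m = x - ln (1 + x)" unfolding bb_def hx by (simp add: x_def)
    then have "\<bar>bb m\<bar> \<le> x^2" using abs_ln_one_plus_x_minus_x_bound_nonneg[OF x0] by simp
    then show ?thesis unfolding gt x_def by (simp add: norm_mult norm_power nom power_divide divide_inverse power_inverse)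
  qed
  have summ: "summable (gamma_term \<omega>)"
  proof (rule summable_comparison_test')
    show "summable (\<lambda>m. inverse (real (Suc m) ^ 2))"
      by (subst summable_Suc_iff[of "\<lambda>n. inverse (real n ^ 2)"]) (rule inverse_power_summable, simp)
    show "norm (gamma_term \<omega> m) \<le> inverse (real (Suc m) ^ 2)" for m by (rule bnd)
  qed
  define T where "T i K = (\<Sum>k<K. bb (2*Q*k + i) - bb (2*Q*k + Q + i))" for i K
  have block: "(\<Sum>m\<in>{k*(2*Q)..<k*(2*Q)+2*Q}. gamma_term \<omega> m) =
      (\<Sum>i<Q. \<omega>^i * of_real (bb (2*Q*k+i) - bb (2*Q*k+Q+i)))" for k
  proof -
    have "(\<Sum>m\<in>{k*(2*Q)..<k*(2*Q)+2*Q}. gamma_term \<omega> m) = (\<Sum>i<Q+Q. gamma_term \<omega> (2*Q*k+i))"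
      by (subst sum_shift_lemma) (simp add: mult_ac, simp only: mult_2_right)
    also have "\<dots> = (\<Sum>i<Q. gamma_term \<omega> (2*Q*k+i)) + (\<Sum>i<Q. gamma_term \<omega> (2*Q*k+(Q+i)))"
      by (rule sum_split_lemma)
    also have "(\<Sum>i<Q. gamma_term \<omega> (2*Q*k+i)) = (\<Sum>i<Q. \<omega>^i * of_real (bb (2*Q*k+i)))"
      by (rule sum.cong[OF refl]) (simp add: gt power_add om2Q)
    also have "(\<Sum>i<Q. gamma_term \<omega> (2*Q*k+(Q+i))) = (\<Sum>i<Q. - (\<omega>^i * of_real (bb (2*Q*k+Q+i))))"
      by (rule sum.cong[OF refl]) (simp add: gt power_add om2Q omQ add_ac)
    finally show ?thesis by (simp add: sum_subtractf sum_negf algebra_simps)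
  qed
  have part: "(\<Sum>m<K*(2*Q). gamma_term \<omega> m) = (\<Sum>i<Q. \<omega>^i * of_real (T i K))" for K
  proof -
    have "(\<Sum>m<K*(2*Q). gamma_term \<omega> m) = (\<Sum>k<K. \<Sum>m\<in>{k*(2*Q)..<k*(2*Q)+2*Q}. gamma_term \<omega> m)"
      by (rule sum.nat_group[symmetric])
    also have "\<dots> = (\<Sum>k<K. \<Sum>i<Q. \<omega>^i * of_real (bb (2*Q*k+i) - bb (2*Q*k+Q+i)))"
      by (rule sum.cong[OF refl]) (rule block)
    also have "\<dots> = (\<Sum>i<Q. \<omega>^i * of_real (T i K))"
      unfolding T_def by (subst sum.swap) (simp add: sum_distrib_left)
    finally show ?thesis .
  qed
  have Tlim: "(\<lambda>K. T i K) \<longlonglongrightarrow> D_coef (Suc i) Q + E_coef (Suc i) p Q" for i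
  proof -
    define al where "al = real (Suc i) / (2 * real Q)"
    define be where "be = (real (Suc i) + 1) / (2 * real Q)"
    define ga where "ga = (real (Suc i) + real Q) / (2 * real Q)"
    define de where "de = (real (Suc i) + real Q + 1) / (2 * real Q)"
    have Qp: "real Q > 0" using Q0 by simp
    have pos: "al > 0" "be > 0" "ga > 0" "de > 0" unfolding al_def be_def ga_def de_def using Qp by auto
    have sumeq: "al + de = be + ga" unfolding al_def be_def ga_def de_def using Qp by (simp add: field_simps)
    have TT: "T i K = (1 / (2 * real Q)) * (\<Sum>k<K. (1/(real k + al) - 1/(real k + (al + 1/2))))
       + (\<Sum>k<K. ln (((real k + al) * (real k + de)) / ((real k + be) * (real k + ga))))" for K
      unfolding T_def term_ident[OF Q0] al_def be_def ga_def de_def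
      by (simp only: sum.distrib sum_distrib_left)
    have "(\<lambda>K. T i K) \<longlonglongrightarrow> (1 / (2 * real Q)) * (Digamma (al + 1/2) - Digamma al) + ln ((Gamma be * Gamma ga) / (Gamma al * Gamma de))"
      unfolding TT
      by (intro tendsto_add tendsto_mult tendsto_const digamma_diff_lim gamma_prod_lim pos sumeq)
    moreover have "(1 / (2 * real Q)) * (Digamma (al + 1/2) - Digamma al) + ln ((Gamma be * Gamma ga) / (Gamma al * Gamma de))
        = D_coef (Suc i) Q + E_coef (Suc i) p Q"
      unfolding D_coef_def E_coef_def al_def be_def ga_def de_def by (simp add: add_ac)
    ultimately show ?thesis by simp
  qed
  have L1: "(\<lambda>K. \<Sum>m<K*(2*Q). gamma_term \<omega> m) \<longlonglongrightarrow> gamma_fun \<omega>"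
  proof -
    have sm: "strict_mono (\<lambda>K::nat. K*(2*Q))" using Q0 by (auto simp: strict_mono_def)
    have "(\<lambda>n. \<Sum>m<n. gamma_term \<omega> m) \<longlonglongrightarrow> gamma_fun \<omega>"
      unfolding gamma_fun_def by (rule summable_LIMSEQ[OF summ])
    from LIMSEQ_subseq_LIMSEQ[OF this sm] show ?thesis by (simp add: o_def)
  qed
  have L2: "(\<lambda>K. \<Sum>m<K*(2*Q). gamma_term \<omega> m) \<longlonglongrightarrow>
      (\<Sum>i<Q. \<omega>^i * of_real (D_coef (Suc i) Q + E_coef (Suc i) p Q))"
    unfolding part by (intro tendsto_sum tendsto_mult tendsto_const tendsto_of_real Tlim)
  have "gamma_fun \<omega> = (\<Sum>i<Q. \<omega>^i * of_real (D_coef (Suc i) Q + E_coef (Suc i) p Q))"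
    by (rule LIMSEQ_unique[OF L1 L2])
  also have "\<dots> = (\<Sum>j=1..Q. \<omega> ^ (j - 1) * complex_of_real (D_coef j Q + E_coef j p Q))"
    by (subst sum_one_lemma) simp
  finally show ?thesis using summ unfolding Q_def by simp
qed

end
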